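(* Let $G$ be a graph with $n$ vertices, $m$ edges, and maximum degree at most $\Delta$, where $\Delta$ is a positive integer, and let $I=\{1,\ldots,\Delta\}$. Suppose $x\in\mathbb{R}_{\geq 0}$, $y\in\mathbb{R}$ and $z_i\in\mathbb{R}_{\geq 0}$ for $i\in I$ satisfy $z_i+z_j\geq j-i$ for all $i,j\in I$ with $i<j$, and $x+iy\geq iz_i$ for all $i\in I$. Then $irr(G)\leq nx+2my$.
   Context: All graphs are finite, simple and undirected. For a graph $G$ with edge set $E(G)$ and vertex degrees $d_G(u)$, the irregularity (in the sense of Albertson) is $irr(G)=\sum_{uv\in E(G)}|d_G(u)-d_G(v)|$. *)

theory Defs
  imports Complex_Main
begin

definition simple_graph :: "'a set \<Rightarrow> 'a set set \<Rightarrow> bool" where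
  "simple_graph V E \<longleftrightarrow> finite V \<and> (\<forall>e\<in>E. e \<subseteq> V \<and> card e = 2)"

definition degree :: "'a set set \<Rightarrow> 'a \<Rightarrow> nat" where
  "degree E u = card {e\<in>E. u \<in> e}"

definition irr :: "'a set set \<Rightarrow> int" where
  "irr E = (\<Sum>e\<in>E. (THE k. \<exists>u v. e = {u, v} \<and> k = \<bar>int (degree E u) - int (degree E v)\<bar>))"

end

theory Submission
  imports Defs
begin

lemma dc:
  assumes "simple_graph V E"
  shows "(\<Sum>e\<in>E. \<Sum>w\<in>e. f w) = (\<Sum>w\<in>V. real (degree E w) * (f w :: real))"
proof -
  have fV: "finite V" and sub: "\<And>e. e \<in> E \<Longrightarrow> e \<subseteq> V"
    using assms by (auto simp: simple_graph_def)
  have fE: "finite E" using sub fV by (meson Pow_iff finite_Pow_iff rev_finite_subset subsetI)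
  have "(\<Sum>e\<in>E. \<Sum>w\<in>e. f w) = (\<Sum>e\<in>E. \<Sum>w\<in>V. if w\<in>e then f w else 0)"
  proof (rule sum.cong)
    fix e assume "e \<in> E"
    hence "V \<inter> e = e" using sub by auto
    thus "(\<Sum>w\<in>e. f w) = (\<Sum>w\<in>V. if w\<in>e then f w else 0)"
      using sum.inter_restrict[OF fV, of f e] by simp
  qed simp
  also have "\<dots> = (\<Sum>w\<in>V. \<Sum>e\<in>E. if w\<in>e then f w else 0)" by (rule sum.swap)
  also have "\<dots> = (\<Sum>w\<in>V. real (degree E w) * f w)"
  proof (rule sum.cong)
    fix w
    have "(\<Sum>e\<in>E. if w\<in>e then f w else 0) = (\<Sum>e\<in>{e\<in>E. w\<in>e}. f w)"
      using sum.inter_filter[OF fE, of "\<lambda>_. f w" "\<lambda>e. w \<in> e"] by simp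
    thus "(\<Sum>e\<in>E. if w\<in>e then f w else 0) = real (degree E w) * f w"
      by (simp add: degree_def)
  qed simp
  finally show ?thesis .
qed

theorem mainTheorem5:
  fixes V :: "'a set" and E :: "'a set set" and \<Delta> :: nat
    and x y :: real and z :: "nat \<Rightarrow> real"
  assumes "simple_graph V E"
    and "\<Delta> \<ge> 1"
    and "\<forall>u\<in>V. degree E u \<le> \<Delta>"
    and "x \<ge> 0"
    and "\<forall>i\<in>{1..\<Delta>}. z i \<ge> 0"
    and "\<forall>i\<in>{1..\<Delta>}. \<forall>j\<in>{1..\<Delta>}. i < j \<longrightarrow> z i + z j \<ge> real j - real i"
    and "\<forall>i\<in>{1..\<Delta>}. x + real i * y \<ge> real i * z i"
  shows "real_of_int (irr E) \<le> real (card V) * x + 2 * real (card E) * y"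
proof -
  define d where "d = degree E"
  have fV: "finite V" and sub: "\<And>e. e \<in> E \<Longrightarrow> e \<subseteq> V" and c2: "\<And>e. e \<in> E \<Longrightarrow> card e = 2"
    using assms(1) by (auto simp: simple_graph_def)
  have fE: "finite E" using sub fV by (meson Pow_iff finite_Pow_iff rev_finite_subset subsetI)
  have degpos: "d w \<ge> 1" if "e \<in> E" "w \<in> e" for e w
  proof -
    have "{e\<in>E. w\<in>e} \<noteq> {}" using that by auto
    moreover have "finite {e\<in>E. w\<in>e}" using fE by simp
    ultimately show ?thesis unfolding d_def degree_def by (simp add: Suc_le_eq card_gt_0_iff)
  qed
  have degle: "d w \<le> \<Delta>" if "w \<in> V" for w using assms(3) that d_def by auto
  have key: "real_of_int (THE k. \<exists>u v. e = {u, v} \<and> k = \<bar>int (degree E u) - int (degree E v)\<bar>)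
     \<le> (\<Sum>w\<in>e. z (d w))" if eE: "e \<in> E" for e
  proof -
    obtain u v where e: "e = {u,v}" "u \<noteq> v" using c2[OF eE] card_2_iff by metis
    have T: "(THE k. \<exists>u v. e = {u, v} \<and> k = \<bar>int (degree E u) - int (degree E v)\<bar>)
       = \<bar>int (d u) - int (d v)\<bar>"
    proof (rule the_equality)
      show "\<exists>u' v'. e = {u', v'} \<and> \<bar>int (d u) - int (d v)\<bar> = \<bar>int (degree E u') - int (degree E v')\<bar>"
        using e d_def by blast
    next
      fix k assume "\<exists>u' v'. e = {u', v'} \<and> k = \<bar>int (degree E u') - int (degree E v')\<bar>"
      then obtain u' v' where "e = {u',v'}" "k = \<bar>int (degree E u') - int (degree E v')\<bar>" by blast
      then show "k = \<bar>int (d u) - int (d v)\<bar>" using e unfolding d_def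
        by (auto simp: doubleton_eq_iff abs_minus_commute)
    qed
    have uV: "u \<in> V" "v \<in> V" using sub[OF eE] e by auto
    have r: "d u \<in> {1..\<Delta>}" "d v \<in> {1..\<Delta>}" using degpos[OF eE] degle uV e by auto
    have z0: "z (d u) \<ge> 0" "z (d v) \<ge> 0" using assms(5) r by auto
    have "\<bar>real (d u) - real (d v)\<bar> \<le> z (d u) + z (d v)"
    proof (cases "d u < d v")
      case True thus ?thesis using assms(6) r by fastforce
    next
      case False
      show ?thesis
      proof (cases "d v < d u")
        case True thus ?thesis using assms(6) r by fastforce
      next
        case False
        with \<open>\<not> d u < d v\<close> have "d u = d v" by simp
        thus ?thesis using z0 by simp
      qed
    qed
    thus ?thesis using T e by simp
  qed
  have "real_of_int (irr E) = (\<Sum>e\<in>E. real_of_int (THE k. \<exists>u v. e = {u, v} \<and> k = \<bar>int (degree E u) - int (degree E v)\<bar>))"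
    unfolding irr_def by simp
  also have "\<dots> \<le> (\<Sum>e\<in>E. \<Sum>w\<in>e. z (d w))" by (rule sum_mono) (rule key)
  also have "\<dots> = (\<Sum>w\<in>V. real (d w) * z (d w))" using dc[OF assms(1)] d_def by simp
  also have "\<dots> \<le> (\<Sum>w\<in>V. x + real (d w) * y)"
  proof (rule sum_mono)
    fix w assume w: "w \<in> V"
    show "real (d w) * z (d w) \<le> x + real (d w) * y"
    proof (cases "d w = 0")
      case True thus ?thesis using assms(4) by simp
    next
      case False
      hence "d w \<in> {1..\<Delta>}" using degle[OF w] by auto
      thus ?thesis using assms(7) by auto
    qed
  qed
  also have "\<dots> = real (card V) * x + y * (\<Sum>w\<in>V. real (d w) * 1)"
    by (simp add: sum.distrib sum_distrib_left mult.commute)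
  also have "(\<Sum>w\<in>V. real (d w) * 1) = (\<Sum>e\<in>E. \<Sum>w\<in>e. (1::real))"
    using dc[OF assms(1), of "\<lambda>_. 1"] d_def by simp
  also have "\<dots> = 2 * real (card E)" using c2 by simp
  finally show ?thesis by (simp add: mult.commute mult.left_commute)
qed

end
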